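(* Let $n,m>3$ be integers and let $\psi$ be an automorphism of $\mathcal{CSR}(m,n)$, and suppose $\psi_1,\dots,\psi_m$ are permutations of $\mathbb{Z}_n$ and $\sigma$ is a permutation of $[m]$ such that $\psi\big(\sum_i x_ie_i\big)=\sum_i\psi_i(x_i)e_{\sigma(i)}$ for every vertex. Then there are $c,d\in\mathbb{Z}_n$ with $c$ coprime to $n$ such that $\psi_1(x)=cx+d$ for all $x\in\mathbb{Z}_n$.
   Context: For positive integers $m,n$, the cyclic simplicial rook graph $\mathcal{CSR}(m,n)$ is the graph whose vertices are the vectors $(a_1,\dots,a_m)\in\mathbb{Z}_n^m$ with $a_1+\cdots+a_m\equiv 0 \pmod n$, two vertices being adjacent if and only if their vectors differ in exactly two coordinates. $[m]=\{1,\dots,m\}$ and $e_i\in\mathbb{Z}_n^m$ is the vector with $1$ in coordinate $i$ and $0$ elsewhere. *)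

theory Defs
  imports "HOL-Combinatorics.Permutations" "HOL-Computational_Algebra.Primes"
begin

text \<open>Vertices of CSR(m,n): vectors indexed by {1..m} with entries in Z_n = {0..<n},
  represented as functions nat => nat that vanish outside {1..m}, with coordinate sum
  divisible by n.\<close>
definition csr_vertices :: "nat \<Rightarrow> nat \<Rightarrow> (nat \<Rightarrow> nat) set" where
  "csr_vertices m n = {x. (\<forall>i\<in>{1..m}. x i < n) \<and> (\<forall>i. i \<notin> {1..m} \<longrightarrow> x i = 0)
                         \<and> (\<Sum>i=1..m. x i) mod n = 0}"

definition csr_adj :: "nat \<Rightarrow> (nat \<Rightarrow> nat) \<Rightarrow> (nat \<Rightarrow> nat) \<Rightarrow> bool" where
  "csr_adj m x y \<longleftrightarrow> card {i\<in>{1..m}. x i \<noteq> y i} = 2"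

definition csr_automorphism :: "nat \<Rightarrow> nat \<Rightarrow> ((nat \<Rightarrow> nat) \<Rightarrow> (nat \<Rightarrow> nat)) \<Rightarrow> bool" where
  "csr_automorphism m n \<psi> \<longleftrightarrow> bij_betw \<psi> (csr_vertices m n) (csr_vertices m n) \<and>
     (\<forall>x\<in>csr_vertices m n. \<forall>y\<in>csr_vertices m n. csr_adj m x y \<longleftrightarrow> csr_adj m (\<psi> x) (\<psi> y))"

end

theory Submission
  imports Defs
begin

lemma split3: "(3::nat) \<le> m \<Longrightarrow> (\<Sum>i=1..m. f i) = f 1 + f 2 + f 3 + (\<Sum>i=4..m. (f i :: 'a::comm_monoid_add))"
proof -
  assume "3 \<le> m"
  then have e: "{1..m} = {1,2,3} \<union> {4..m}" by auto
  have "(\<Sum>i=1..m. f i) = (\<Sum>i\<in>{1,2,3}. f i) + (\<Sum>i=4..m. f i)"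
    unfolding e by (rule sum.union_disjoint) auto
  then show ?thesis by (simp add: add.assoc)
qed

definition vec3 :: "nat \<Rightarrow> nat \<Rightarrow> nat \<Rightarrow> nat \<Rightarrow> nat" where
  "vec3 a b c = (\<lambda>i. if i = 1 then a else if i = 2 then b else if i = 3 then c else 0)"

lemma vec3_simps: "vec3 a b c 1 = a" "vec3 a b c 2 = b" "vec3 a b c 3 = c"
  "i \<ge> 4 \<Longrightarrow> vec3 a b c i = 0"
  by (auto simp: vec3_def)

lemma vec3_in:
  assumes "3 \<le> m" "a < n" "b < n" "c < n" "(a + b + c) mod n = 0"
  shows "vec3 a b c \<in> csr_vertices m n"
proof -
  have "(\<Sum>i=1..m. vec3 a b c i) = a + b + c + (\<Sum>i=4..m. vec3 a b c i)"
    using split3[OF assms(1), of "vec3 a b c"] by (simp only: vec3_simps)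
  also have "(\<Sum>i=4..m. vec3 a b c i) = 0" by (auto simp: vec3_simps)
  finally show ?thesis using assms unfolding csr_vertices_def by (auto simp: vec3_def)
qed

theorem lemma8:
  fixes m n :: nat and \<psi> :: "(nat \<Rightarrow> nat) \<Rightarrow> (nat \<Rightarrow> nat)"
    and \<psi>s :: "nat \<Rightarrow> nat \<Rightarrow> nat" and \<sigma> :: "nat \<Rightarrow> nat"
  assumes "n > 3" and "m > 3"
    and "csr_automorphism m n \<psi>"
    and "\<forall>i\<in>{1..m}. bij_betw (\<psi>s i) {0..<n} {0..<n}"
    and "\<sigma> permutes {1..m}"
    and "\<forall>x\<in>csr_vertices m n. \<forall>i\<in>{1..m}. \<psi> x (\<sigma> i) = \<psi>s i (x i)"
  shows "\<exists>c d. c < n \<and> d < n \<and> coprime c n \<and> (\<forall>x<n. \<psi>s 1 x = (c * x + d) mod n)"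
proof -
  have m3: "3 \<le> m" using assms(2) by simp
  have key: "int n dvd (\<Sum>i=1..m. int (\<psi>s i (x i)))" if x: "x \<in> csr_vertices m n" for x
  proof -
    have "\<psi> x \<in> csr_vertices m n" using assms(3) x unfolding csr_automorphism_def bij_betw_def by auto
    then have "(\<Sum>i=1..m. \<psi> x i) mod n = 0" unfolding csr_vertices_def by auto
    moreover have "(\<Sum>i=1..m. \<psi> x i) = (\<Sum>i=1..m. \<psi> x (\<sigma> i))"
    proof -
      have "(\<Sum>i=1..m. \<psi> x (\<sigma> i)) = sum (\<psi> x) (\<sigma> ` {1..m})"
        using sum.reindex[OF permutes_inj_on[OF assms(5)], of "\<psi> x"] by simp
      then show ?thesis using permutes_image[OF assms(5)] by simp
    qed
    moreover have "(\<Sum>i=1..m. \<psi> x (\<sigma> i)) = (\<Sum>i=1..m. \<psi>s i (x i))"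
      using assms(6) x by (intro sum.cong) auto
    ultimately have "n dvd (\<Sum>i=1..m. \<psi>s i (x i))" by auto
    then show ?thesis by (metis of_nat_dvd_iff of_nat_sum)
  qed
  define h where "h i a = int (\<psi>s i a)" for i a
  define K where "K = (\<Sum>i=4..m. h i 0)"
  have P: "int n dvd h 1 a + h 2 b + h 3 c + K"
    if "a < n" "b < n" "c < n" "(a + b + c) mod n = 0" for a b c
  proof -
    have "(\<Sum>i=1..m. int (\<psi>s i (vec3 a b c i))) = h 1 a + h 2 b + h 3 c + (\<Sum>i=4..m. int (\<psi>s i (vec3 a b c i)))"
      using split3[OF m3, of "\<lambda>i. int (\<psi>s i (vec3 a b c i))"] by (simp only: vec3_simps h_def)
    also have "(\<Sum>i=4..m. int (\<psi>s i (vec3 a b c i))) = K"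
      unfolding K_def h_def by (intro sum.cong) (auto simp: vec3_simps)
    finally show ?thesis using key[OF vec3_in[OF m3 that]] by simp
  qed
  define neg where "neg a = (n - a mod n) mod n" for a
  have n0: "n > 0" using assms(1) by simp
  have negl: "neg a < n" for a using n0 unfolding neg_def by simp
  have negs: "(a + neg a) mod n = 0" for a
  proof -
    have "(a + neg a) mod n = (a mod n + (n - a mod n)) mod n"
      unfolding neg_def by (metis mod_add_right_eq mod_add_left_eq)
    also have "a mod n + (n - a mod n) = n" using n0 by (simp add: le_less)
    finally show ?thesis by simp
  qed
  define g where "g a = h 1 a - h 1 0" for a
  have g12: "int n dvd (h 1 b - h 1 0) - (h 2 b - h 2 0)" if "b < n" for b
  proof -
    have "int n dvd h 1 b + h 2 0 + h 3 (neg b) + K" using P[of b 0 "neg b"] that negl negs n0 by simp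
    moreover have "int n dvd h 1 0 + h 2 b + h 3 (neg b) + K" using P[of 0 b "neg b"] that negl negs n0 by simp
    ultimately have "int n dvd (h 1 b + h 2 0 + h 3 (neg b) + K) - (h 1 0 + h 2 b + h 3 (neg b) + K)"
      by (rule dvd_diff)
    then show ?thesis by (simp add: algebra_simps)
  qed
  have gadd: "int n dvd g ((a + b) mod n) - g a - g b" if "a < n" "b < n" for a b
  proof -
    let ?s = "(a + b) mod n"
    have "(a + b + neg ?s) mod n = 0" using negs[of ?s] by (simp add: mod_add_left_eq)
    then have A1: "int n dvd h 1 a + h 2 b + h 3 (neg ?s) + K" using P[of a b "neg ?s"] that negl by simp
    have A2: "int n dvd h 1 ?s + h 2 0 + h 3 (neg ?s) + K" using P[of ?s 0 "neg ?s"] negl negs n0 by simp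
    have "int n dvd (h 1 ?s + h 2 0 + h 3 (neg ?s) + K) - (h 1 a + h 2 b + h 3 (neg ?s) + K)"
      by (rule dvd_diff[OF A2 A1])
    then have "int n dvd (h 1 ?s + h 2 0 + h 3 (neg ?s) + K) - (h 1 a + h 2 b + h 3 (neg ?s) + K)
       - ((h 1 b - h 1 0) - (h 2 b - h 2 0))" using g12[OF that(2)] by (rule dvd_diff)
    then show ?thesis unfolding g_def by (simp add: algebra_simps)
  qed
  have glin: "int n dvd g x - int x * g 1" if "x < n" for x
    using that
  proof (induction x)
    case 0 then show ?case by (simp add: g_def)
  next
    case (Suc x)
    have "int n dvd g ((x + 1) mod n) - g x - g 1" using gadd[of x 1] Suc.prems by simp
    moreover have "(x + 1) mod n = Suc x" using Suc.prems by simp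
    ultimately have "int n dvd g (Suc x) - g x - g 1" by simp
    from dvd_add[OF this Suc.IH] Suc.prems show ?case by (simp add: algebra_simps)
  qed
  define c where "c = nat (g 1 mod int n)"
  define d where "d = \<psi>s 1 0"
  have bij1: "bij_betw (\<psi>s 1) {0..<n} {0..<n}" using assms(4) m3 by auto
  have rng: "\<psi>s 1 x < n" if "x < n" for x using bij1 that unfolding bij_betw_def by auto
  have cl: "c < n" unfolding c_def using n0 by (simp add: nat_less_iff)
  have dl: "d < n" unfolding d_def using rng n0 by simp
  have form: "\<psi>s 1 x = (c * x + d) mod n" if "x < n" for x
  proof -
    have ci: "int c = g 1 mod int n" unfolding c_def using n0 by simp
    have "int n dvd (h 1 x - h 1 0) - int x * g 1" using glin[OF that] by (simp add: g_def)
    then have "(h 1 x) mod int n = (int x * g 1 + h 1 0) mod int n"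
      by (metis (no_types, lifting) diff_diff_eq2 diff_add_cancel mod_eq_dvd_iff)
    also have "\<dots> = (int x * int c + h 1 0) mod int n"
      unfolding ci by (metis mod_add_left_eq mod_mult_right_eq)
    finally have "int (\<psi>s 1 x) mod int n = int ((c * x + d) mod n)"
      unfolding h_def d_def by (simp add: of_nat_mod algebra_simps)
    then have "int (\<psi>s 1 x) = int ((c * x + d) mod n)" using rng[OF that] by simp
    then show ?thesis by simp
  qed
  have "\<exists>x<n. \<psi>s 1 x = (d + 1) mod n"
  proof -
    have "(d + 1) mod n \<in> {0..<n}" using n0 by simp
    then have "(d + 1) mod n \<in> \<psi>s 1 ` {0..<n}" using bij1 unfolding bij_betw_def by simp
    then show ?thesis by force
  qed
  then obtain x where x: "x < n" "(c * x + d) mod n = (d + 1) mod n" using form by metis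
  then have cx: "(c * x) mod n = 1 mod n"
    by (smt (verit, best) add.assoc add.commute add_left_cancel nat_mod_eq_iff)
  have "coprime c n"
    using cx by (metis mod_by_0 coprime_mult_right_iff coprime_mod_left_iff coprime_commute coprime_1_right)
  show ?thesis using cl dl form \<open>coprime c n\<close> by blast
qed

end
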